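(* The asynchronous subtyping relation $\leqslant$ on session trees is reflexive and transitive.
   Context: Sorts: $\mathsf{S} ::= \mathtt{nat} \mid \mathtt{int} \mid \mathtt{bool} \mid \mathtt{unit}$; subsorting $\leq:$ is the least reflexive relation on sorts with $\mathtt{nat}\leq:\mathtt{int}$. Session trees are the possibly infinite terms generated coinductively by $\mathsf{T} ::= \mathtt{end} \mid \&_{i\in I}\mathsf{p}?\ell_i(\mathsf{S}_i).\mathsf{T}_i \mid \oplus_{i\in I}\mathsf{p}!\ell_i(\mathsf{S}_i).\mathsf{T}_i$ with $I$ finite nonempty and labels $\ell_i$ pairwise distinct ($\&$: branching, i.e. input from $\mathsf{p}$; $\oplus$: selection, i.e. output to $\mathsf{p}$). SISO trees: $\mathsf{W} ::= \mathtt{end} \mid \mathsf{p}?\ell(\mathsf{S}).\mathsf{W} \mid \mathsf{p}!\ell(\mathsf{S}).\mathsf{W}$ (coinductively); $\mathrm{act}(\mathsf{W})$ is the set of symbols $\mathsf{p}?$ (resp. $\mathsf{p}!$) for inputs from (resp. outputs to) $\mathsf{p}$ occurring in $\mathsf{W}$. $\mathcal{A}^{(\mathsf{p})}$: nonempty finite sequences of inputs $\mathsf{q}?\ell(\mathsf{S})$ with $\mathsf{q}\neq\mathsf{p}$; $\mathcal{B}^{(\mathsf{p})}$: nonempty finite sequences of inputs $\mathsf{r}?\ell(\mathsf{S})$ (any $\mathsf{r}$) and outputs $\mathsf{q}!\ell(\mathsf{S})$ with $\mathsf{q}\neq\mathsf{p}$, used as prefixes. SISO refinement $\lesssim$: the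 largest relation on SISO trees closed backward under: $\mathsf{p}?\ell(\mathsf{S}).\mathsf{W}\lesssim\mathsf{p}?\ell(\mathsf{S}').\mathsf{W}'$ if $\mathsf{S}'\leq:\mathsf{S}$, $\mathsf{W}\lesssim\mathsf{W}'$; $\mathsf{p}?\ell(\mathsf{S}).\mathsf{W}\lesssim\mathcal{A}^{(\mathsf{p})}.\mathsf{p}?\ell(\mathsf{S}').\mathsf{W}'$ if $\mathsf{S}'\leq:\mathsf{S}$, $\mathsf{W}\lesssim\mathcal{A}^{(\mathsf{p})}.\mathsf{W}'$, $\mathrm{act}(\mathsf{W})=\mathrm{act}(\mathcal{A}^{(\mathsf{p})}.\mathsf{W}')$; $\mathsf{p}!\ell(\mathsf{S}).\mathsf{W}\lesssim\mathsf{p}!\ell(\mathsf{S}').\mathsf{W}'$ if $\mathsf{S}\leq:\mathsf{S}'$, $\mathsf{W}\lesssim\mathsf{W}'$; $\mathsf{p}!\ell(\mathsf{S}).\mathsf{W}\lesssim\mathcal{B}^{(\mathsf{p})}.\mathsf{p}!\ell(\mathsf{S}').\mathsf{W}'$ if $\mathsf{S}\leq:\mathsf{S}'$, $\mathsf{W}\lesssim\mathcal{B}^{(\mathsf{p})}.\mathsf{W}'$, $\mathrm{act}(\mathsf{W})=\mathrm{act}(\mathcal{B}^{(\mathsf{p})}.\mathsf{W}')$; $\mathtt{end}\lesssim\mathtt{end}$. SO trees $\mathsf{U} ::= \mathtt{end} \mid \&_{i\in I}\mathsf{p}?\ell_i(\mathsf{S}_i).\mathsf{U}_i \mid \mathsf{p}!\ell(\mathsf{S}).\mathsf{U}$;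 SI trees $\mathsf{V} ::= \mathtt{end} \mid \mathsf{p}?\ell(\mathsf{S}).\mathsf{V} \mid \oplus_{i\in I}\mathsf{p}!\ell_i(\mathsf{S}_i).\mathsf{V}_i$. Decompositions (coinductively): $[\![\mathtt{end}]\!]_{SO}=\{\mathtt{end}\}$, $[\![\oplus_{i\in I}\mathsf{p}!\ell_i(\mathsf{S}_i).\mathsf{T}_i]\!]_{SO}=\{\mathsf{p}!\ell_i(\mathsf{S}_i).\mathsf{U}: i\in I,\mathsf{U}\in[\![\mathsf{T}_i]\!]_{SO}\}$, $[\![\&_{i\in I}\mathsf{p}?\ell_i(\mathsf{S}_i).\mathsf{T}_i]\!]_{SO}=\{\&_{i\in I}\mathsf{p}?\ell_i(\mathsf{S}_i).\mathsf{U}_i: \mathsf{U}_i\in[\![\mathsf{T}_i]\!]_{SO}\}$; $[\![\mathtt{end}]\!]_{SI}=\{\mathtt{end}\}$, $[\![\&_{i\in I}\mathsf{p}?\ell_i(\mathsf{S}_i).\mathsf{T}_i]\!]_{SI}=\{\mathsf{p}?\ell_i(\mathsf{S}_i).\mathsf{V}: i\in I,\mathsf{V}\in[\![\mathsf{T}_i]\!]_{SI}\}$, $[\![\oplus_{i\in I}\mathsf{p}!\ell_i(\mathsf{S}_i).\mathsf{T}_i]\!]_{SI}=\{\oplus_{i\in I}\mathsf{p}!\ell_i(\mathsf{S}_i).\mathsf{V}_i: \mathsf{V}_i\in[\![\mathsf{T}_i]\!]_{SI}\}$. (Applying $[\![\cdot]\!]_{SI}$ to an SO tree or $[\![\cdot]\!]_{SO}$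 to an SI tree yields SISO trees.) The asynchronous subtyping: $\mathsf{T}\leqslant\mathsf{T}'$ iff for all $\mathsf{U}\in[\![\mathsf{T}]\!]_{SO}$ and $\mathsf{V}'\in[\![\mathsf{T}']\!]_{SI}$ there exist $\mathsf{W}\in[\![\mathsf{U}]\!]_{SI}$ and $\mathsf{W}'\in[\![\mathsf{V}']\!]_{SO}$ with $\mathsf{W}\lesssim\mathsf{W}'$. *)

theory Defs
  imports Main "HOL-Library.Finite_Map"
begin

datatype sort = SNat | SInt | SBool | SUnit

definition subsort :: "sort \<Rightarrow> sort \<Rightarrow> bool" where
  "subsort S S' \<longleftrightarrow> S = S' \<or> (S = SNat \<and> S' = SInt)"

(* A branching/selection is a finite map from
   labels to (payload sort, continuation); labels are thus pairwise distinct and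
   the index set finite.  Nonemptiness is imposed by wf_stree. *)
codatatype ('p, 'l) stree =
    End
  | Bra 'p "('l, sort \<times> ('p, 'l) stree) fmap"
  | Sel 'p "('l, sort \<times> ('p, 'l) stree) fmap"

coinductive wf_stree :: "('p, 'l) stree \<Rightarrow> bool" where
  wf_end: "wf_stree End"
| wf_bra: "fmdom m \<noteq> {||} \<Longrightarrow> (\<forall>l S T. fmlookup m l = Some (S, T) \<longrightarrow> wf_stree T)
           \<Longrightarrow> wf_stree (Bra p m)"
| wf_sel: "fmdom m \<noteq> {||} \<Longrightarrow> (\<forall>l S T. fmlookup m l = Some (S, T) \<longrightarrow> wf_stree T)
           \<Longrightarrow> wf_stree (Sel p m)"

codatatype ('p, 'l) siso =
    WEnd
  | WIn 'p 'l sort "('p, 'l) siso"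
  | WOut 'p 'l sort "('p, 'l) siso"

primcorec siso_to_stree :: "('p, 'l) siso \<Rightarrow> ('p, 'l) stree" where
  "siso_to_stree W = (case W of
      WEnd \<Rightarrow> End
    | WIn p l S W' \<Rightarrow> Bra p (fmmap (\<lambda>X. (S, siso_to_stree X)) (fmupd l W' fmempty))
    | WOut p l S W' \<Rightarrow> Sel p (fmmap (\<lambda>X. (S, siso_to_stree X)) (fmupd l W' fmempty)))"

(* so_dec T U  means  U \<in> [[T]]_SO *)
coinductive so_dec :: "('p, 'l) stree \<Rightarrow> ('p, 'l) stree \<Rightarrow> bool" where
  so_end: "so_dec End End"
| so_sel: "fmlookup m l = Some (S, T) \<Longrightarrow> so_dec T U
           \<Longrightarrow> so_dec (Sel p m) (Sel p (fmupd l (S, U) fmempty))"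
| so_bra: "fmdom m' = fmdom m \<Longrightarrow>
           (\<forall>l S T. fmlookup m l = Some (S, T) \<longrightarrow>
               (\<exists>U. fmlookup m' l = Some (S, U) \<and> so_dec T U))
           \<Longrightarrow> so_dec (Bra p m) (Bra p m')"

(* si_dec T V  means  V \<in> [[T]]_SI *)
coinductive si_dec :: "('p, 'l) stree \<Rightarrow> ('p, 'l) stree \<Rightarrow> bool" where
  si_end: "si_dec End End"
| si_bra: "fmlookup m l = Some (S, T) \<Longrightarrow> si_dec T V
           \<Longrightarrow> si_dec (Bra p m) (Bra p (fmupd l (S, V) fmempty))"
| si_sel: "fmdom m' = fmdom m \<Longrightarrow>
           (\<forall>l S T. fmlookup m l = Some (S, T) \<longrightarrow>
               (\<exists>V. fmlookup m' l = Some (S, V) \<and> si_dec T V))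
           \<Longrightarrow> si_dec (Sel p m) (Sel p m')"

datatype ('p, 'l) action = AIn 'p 'l sort | AOut 'p 'l sort

fun prefix :: "('p, 'l) action list \<Rightarrow> ('p, 'l) siso \<Rightarrow> ('p, 'l) siso" where
  "prefix [] W = W"
| "prefix (AIn q l S # as) W = WIn q l S (prefix as W)"
| "prefix (AOut q l S # as) W = WOut q l S (prefix as W)"

definition is_A :: "'p \<Rightarrow> ('p, 'l) action list \<Rightarrow> bool" where
  "is_A p as \<longleftrightarrow> as \<noteq> [] \<and> (\<forall>a \<in> set as. \<exists>q l S. a = AIn q l S \<and> q \<noteq> p)"

definition is_B :: "'p \<Rightarrow> ('p, 'l) action list \<Rightarrow> bool" where
  "is_B p as \<longleftrightarrow> as \<noteq> [] \<and>
     (\<forall>a \<in> set as. (\<exists>r l S. a = AIn r l S) \<or> (\<exists>q l S. a = AOut q l S \<and> q \<noteq> p))"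

datatype 'p act_sym = InSym 'p | OutSym 'p

inductive in_act :: "'p act_sym \<Rightarrow> ('p, 'l) siso \<Rightarrow> bool" where
  "in_act (InSym p) (WIn p l S W)"
| "in_act (OutSym p) (WOut p l S W)"
| "in_act a W \<Longrightarrow> in_act a (WIn q l S W)"
| "in_act a W \<Longrightarrow> in_act a (WOut q l S W)"

definition act :: "('p, 'l) siso \<Rightarrow> 'p act_sym set" where
  "act W = {a. in_act a W}"

coinductive refines :: "('p, 'l) siso \<Rightarrow> ('p, 'l) siso \<Rightarrow> bool" where
  ref_in: "subsort S' S \<Longrightarrow> refines W W'
           \<Longrightarrow> refines (WIn p l S W) (WIn p l S' W')"
| ref_in_A: "is_A p A \<Longrightarrow> subsort S' S \<Longrightarrow> refines W (prefix A W')
           \<Longrightarrow> act W = act (prefix A W')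
           \<Longrightarrow> refines (WIn p l S W) (prefix A (WIn p l S' W'))"
| ref_out: "subsort S S' \<Longrightarrow> refines W W'
           \<Longrightarrow> refines (WOut p l S W) (WOut p l S' W')"
| ref_out_B: "is_B p B \<Longrightarrow> subsort S S' \<Longrightarrow> refines W (prefix B W')
           \<Longrightarrow> act W = act (prefix B W')
           \<Longrightarrow> refines (WOut p l S W) (prefix B (WOut p l S' W'))"
| ref_end: "refines WEnd WEnd"

definition async_sub :: "('p, 'l) stree \<Rightarrow> ('p, 'l) stree \<Rightarrow> bool" where
  "async_sub T T' \<longleftrightarrow>
     (\<forall>U V'. so_dec T U \<longrightarrow> si_dec T' V' \<longrightarrow>
        (\<exists>W W'. si_dec U (siso_to_stree W) \<and> so_dec V' (siso_to_stree W') \<and> refines W W'))"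

end

theory Submission
  imports Defs
begin


definition allA :: "'p \<Rightarrow> ('p, 'l) action list \<Rightarrow> bool" where
  "allA p A \<longleftrightarrow> (\<forall>a \<in> set A. \<exists>q l S. a = AIn q l S \<and> q \<noteq> p)"

definition allB :: "'p \<Rightarrow> ('p, 'l) action list \<Rightarrow> bool" where
  "allB p B \<longleftrightarrow> (\<forall>a \<in> set B. (\<exists>r l S. a = AIn r l S) \<or> (\<exists>q l S. a = AOut q l S \<and> q \<noteq> p))"

lemma is_A_allA: "is_A p A \<longleftrightarrow> A \<noteq> [] \<and> allA p A"
  unfolding is_A_def allA_def by blast

lemma is_B_allB: "is_B p A \<longleftrightarrow> A \<noteq> [] \<and> allB p A"
  unfolding is_B_def allB_def by blast

lemma allA_simps[simp]: "allA p [] " "allA p (a # A) \<longleftrightarrow> (\<exists>q l S. a = AIn q l S \<and> q \<noteq> p) \<and> allA p A"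
  "allA p (A @ B) \<longleftrightarrow> allA p A \<and> allA p B"
  unfolding allA_def by auto

lemma allB_simps[simp]: "allB p [] " "allB p (a # A) \<longleftrightarrow> ((\<exists>r l S. a = AIn r l S) \<or> (\<exists>q l S. a = AOut q l S \<and> q \<noteq> p)) \<and> allB p A"
  "allB p (A @ B) \<longleftrightarrow> allB p A \<and> allB p B"
  unfolding allB_def by auto

lemma prefix_append[simp]: "prefix (A @ B) W = prefix A (prefix B W)"
proof (induction A)
  case Nil then show ?case by simp
next
  case (Cons a A) then show ?case by (cases a) auto
qed

lemma prefix_Cons: "prefix (a # A) W = prefix [a] (prefix A W)"
  by (cases a) auto

lemma prefix_single_inj: "prefix [a] X = prefix [b] Y \<longleftrightarrow> a = b \<and> X = Y"
  by (cases a; cases b) auto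

lemma split_pre:
  "prefix A X = prefix B (prefix [a] Y) \<Longrightarrow>
   (\<exists>C. B = A @ C \<and> X = prefix C (prefix [a] Y)) \<or> (\<exists>C. A = B @ a # C \<and> Y = prefix C X)"
proof (induction A arbitrary: B)
  case Nil then show ?case by auto
next
  case (Cons a1 A)
  show ?case
  proof (cases B)
    case Nil
    with Cons.prems have "prefix [a1] (prefix A X) = prefix [a] Y"
      by (simp add: prefix_Cons[of a1 A X, symmetric])
    then show ?thesis using Nil by (auto simp: prefix_single_inj)
  next
    case (Cons b B')
    with Cons.prems have "prefix [a1] (prefix A X) = prefix [b] (prefix B' (prefix [a] Y))"
      by (metis prefix_Cons)
    then have "a1 = b" "prefix A X = prefix B' (prefix [a] Y)" by (auto simp: prefix_single_inj)
    from Cons.IH[OF this(2)] show ?thesis using \<open>a1 = b\<close> Cons by auto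
  qed
qed

fun sym_of :: "('p, 'l) action \<Rightarrow> 'p act_sym" where
  "sym_of (AIn q l S) = InSym q"
| "sym_of (AOut q l S) = OutSym q"

lemma in_act_WIn: "in_act a (WIn q l S W) \<longleftrightarrow> a = InSym q \<or> in_act a W"
  by (auto elim: in_act.cases intro: in_act.intros)

lemma in_act_WOut: "in_act a (WOut q l S W) \<longleftrightarrow> a = OutSym q \<or> in_act a W"
  by (auto elim: in_act.cases intro: in_act.intros)

lemma in_act_WEnd[simp]: "\<not> in_act a WEnd"
  by (auto elim: in_act.cases)

lemma act_simps[simp]: "act WEnd = {}" "act (WIn q l S W) = insert (InSym q) (act W)"
  "act (WOut q l S W) = insert (OutSym q) (act W)"
  unfolding act_def by (auto simp: in_act_WIn in_act_WOut)

lemma act_prefix: "act (prefix A W) = sym_of ` set A \<union> act W"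
proof (induction A)
  case Nil then show ?case by simp
next
  case (Cons a A) then show ?case by (cases a) auto
qed

lemma Inv_in0:
  assumes "refines (WIn p l S W) Z"
  shows "\<exists>A S' W'. Z = prefix A (WIn p l S' W') \<and> allA p A \<and> subsort S' S \<and> refines W (prefix A W')"
  using assms
proof (cases rule: refines.cases)
  case (ref_in S' W')
  then show ?thesis by (intro exI[of _ "[]"]) auto
next
  case (ref_in_A A S' W')
  then show ?thesis by (auto simp: is_A_allA)
qed

lemma Inv_out0:
  assumes "refines (WOut p l S W) Z"
  shows "\<exists>B S' W'. Z = prefix B (WOut p l S' W') \<and> allB p B \<and> subsort S S' \<and> refines W (prefix B W')"
  using assms
proof (cases rule: refines.cases)
  case (ref_out S' W')
  then show ?thesis by (intro exI[of _ "[]"]) auto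
next
  case (ref_out_B B S' W')
  then show ?thesis by (auto simp: is_B_allB)
qed

lemma pre_WIn: "A \<noteq> [] \<Longrightarrow> WIn p l S W = prefix A X \<Longrightarrow> InSym p \<in> sym_of ` set A"
  by (cases A; cases "hd A") auto

lemma pre_WOut: "A \<noteq> [] \<Longrightarrow> WOut p l S W = prefix A X \<Longrightarrow> OutSym p \<in> sym_of ` set A"
  by (cases A; cases "hd A") auto

lemma in_act_iff: "in_act a W \<longleftrightarrow> a \<in> act W"
  by (simp add: act_def)

lemma act_pres1: "in_act a W \<Longrightarrow> refines W W' \<Longrightarrow> in_act a W'"
proof (induction arbitrary: W' rule: in_act.induct)
  case (1 p l S W)
  from Inv_in0[OF 1] obtain A S' W0 where "W' = prefix A (WIn p l S' W0)" by blast
  then show ?case by (auto simp: in_act_iff act_prefix)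
next
  case (2 p l S W)
  from Inv_out0[OF 2] obtain A S' W0 where "W' = prefix A (WOut p l S' W0)" by blast
  then show ?case by (auto simp: in_act_iff act_prefix)
next
  case (3 a W q l S)
  from Inv_in0[OF 3(3)] obtain A S' W0 where W': "W' = prefix A (WIn q l S' W0)" "refines W (prefix A W0)"
    by blast
  with 3 have "in_act a (prefix A W0)" by blast
  then show ?case using W' by (auto simp: in_act_iff act_prefix)
next
  case (4 a W q l S)
  from Inv_out0[OF 4(3)] obtain A S' W0 where W': "W' = prefix A (WOut q l S' W0)" "refines W (prefix A W0)"
    by blast
  with 4 have "in_act a (prefix A W0)" by blast
  then show ?case using W' by (auto simp: in_act_iff act_prefix)
qed

lemma act_pres2: "in_act a W' \<Longrightarrow> refines W W' \<Longrightarrow> in_act a W"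
proof (induction arbitrary: W rule: in_act.induct)
  case (1 p l S W0)
  from 1 show ?case
    by (cases rule: refines.cases) (auto simp: in_act_iff act_prefix is_A_def is_B_def dest: pre_WIn pre_WOut)
next
  case (2 p l S W0)
  from 2 show ?case
    by (cases rule: refines.cases) (auto simp: in_act_iff act_prefix is_A_def is_B_def dest: pre_WIn pre_WOut)
next
  case (3 a W0 q l S)
  have h: "a \<in> act (WIn q l S W0)" using 3(1) by (simp add: in_act_iff)
  from 3(3) show ?case
    by (cases rule: refines.cases) (use 3 h in \<open>auto simp: in_act_iff act_prefix is_A_def is_B_def dest: pre_WIn pre_WOut\<close>)
next
  case (4 a W0 q l S)
  have h: "a \<in> act (WOut q l S W0)" using 4(1) by (simp add: in_act_iff)
  from 4(3) show ?case
    by (cases rule: refines.cases) (use 4 h in \<open>auto simp: in_act_iff act_prefix is_A_def is_B_def dest: pre_WIn pre_WOut\<close>)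
qed

lemma act_pres: "refines W W' \<Longrightarrow> act W = act W'"
  unfolding act_def using act_pres1 act_pres2 by blast

lemma Intro_in:
  assumes "allA p A" "subsort S' S" "refines W (prefix A W')"
  shows "refines (WIn p l S W) (prefix A (WIn p l S' W'))"
proof (cases "A = []")
  case True then show ?thesis using assms by (auto intro: refines.intros)
next
  case False then show ?thesis using assms act_pres[OF assms(3)]
    by (auto intro: refines.ref_in_A simp: is_A_allA)
qed

lemma Intro_out:
  assumes "allB p A" "subsort S S'" "refines W (prefix A W')"
  shows "refines (WOut p l S W) (prefix A (WOut p l S' W'))"
proof (cases "A = []")
  case True then show ?thesis using assms by (auto intro: refines.intros)
next
  case False then show ?thesis using assms act_pres[OF assms(3)]
    by (auto intro: refines.ref_out_B simp: is_B_allB)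
qed

lemma allA_set: "allA p A \<Longrightarrow> set B \<subseteq> set A \<Longrightarrow> allA p B"
  unfolding allA_def by blast
lemma allB_set: "allB p A \<Longrightarrow> set B \<subseteq> set A \<Longrightarrow> allB p B"
  unfolding allB_def by blast

lemma Push_in:
  "allA p C \<Longrightarrow> refines (prefix C (WIn p l S Y)) Z \<Longrightarrow>
   \<exists>A' S' Z'. Z = prefix A' (WIn p l S' Z') \<and> allA p A' \<and> subsort S' S \<and> refines (prefix C Y) (prefix A' Z')"
proof (induction C arbitrary: Z)
  case Nil then show ?case using Inv_in0 by fastforce
next
  case (Cons c C)
  then obtain q m R where c: "c = AIn q m R" "q \<noteq> p" and aC: "allA p C" by auto
  with Cons.prems have "refines (WIn q m R (prefix C (WIn p l S Y))) Z" by simp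
  from Inv_in0[OF this] obtain A R1 Z0 where Z: "Z = prefix A (WIn q m R1 Z0)" "allA q A" "subsort R1 R"
    "refines (prefix C (WIn p l S Y)) (prefix A Z0)" by blast
  from Cons.IH[OF aC Z(4)] obtain A'' S' Z'' where IH: "prefix A Z0 = prefix A'' (WIn p l S' Z'')"
    "allA p A''" "subsort S' S" "refines (prefix C Y) (prefix A'' Z'')" by blast
  from IH(1) have "prefix A Z0 = prefix A'' (prefix [AIn p l S'] Z'')" by simp
  from split_pre[OF this] show ?case
  proof
    assume "\<exists>D. A'' = A @ D \<and> Z0 = prefix D (prefix [AIn p l S'] Z'')"
    then obtain D where D: "A'' = A @ D" "Z0 = prefix D (prefix [AIn p l S'] Z'')" by blast
    have "Z = prefix (A @ AIn q m R1 # D) (WIn p l S' Z'')" using Z D by simp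
    moreover have "allA p (A @ AIn q m R1 # D)" using IH(2) D c by simp
    moreover have "refines (prefix (c # C) Y) (prefix (A @ AIn q m R1 # D) Z'')"
      using Intro_in[OF Z(2) Z(3), of "prefix C Y" "prefix D Z''" m] IH(4) D c by simp
    ultimately show ?thesis using IH(3) by blast
  next
    assume "\<exists>D. A = A'' @ AIn p l S' # D \<and> Z'' = prefix D Z0"
    then obtain D where D: "A = A'' @ AIn p l S' # D" "Z'' = prefix D Z0" by blast
    have "Z = prefix A'' (WIn p l S' (prefix D (WIn q m R1 Z0)))" using Z D by simp
    moreover have "allA q (A'' @ D)" using Z(2) D by simp
    moreover have "refines (prefix (c # C) Y) (prefix (A'' @ D) (WIn q m R1 Z0))"
      using Intro_in[OF \<open>allA q (A'' @ D)\<close> Z(3), of "prefix C Y" Z0 m] IH(4) D c by simp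
    ultimately show ?thesis using IH(2,3) by (metis prefix_append)
  qed
qed

lemma Push_out:
  "allB p C \<Longrightarrow> refines (prefix C (WOut p l S Y)) Z \<Longrightarrow>
   \<exists>B' S' Z'. Z = prefix B' (WOut p l S' Z') \<and> allB p B' \<and> subsort S S' \<and> refines (prefix C Y) (prefix B' Z')"
proof (induction C arbitrary: Z)
  case Nil then show ?case using Inv_out0 by fastforce
next
  case (Cons c C)
  then have aC: "allB p C" by auto
  from Cons.prems(1) consider (i) r m R where "c = AIn r m R" | (o) q m R where "c = AOut q m R" "q \<noteq> p"
    by auto
  then show ?case
  proof cases
    case i
    with Cons.prems have "refines (WIn r m R (prefix C (WOut p l S Y))) Z" by simp
    from Inv_in0[OF this] obtain A R1 Z0 where Z: "Z = prefix A (WIn r m R1 Z0)" "allA r A" "subsort R1 R"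
      "refines (prefix C (WOut p l S Y)) (prefix A Z0)" by blast
    from Cons.IH[OF aC Z(4)] obtain B'' S' Z'' where IH: "prefix A Z0 = prefix B'' (WOut p l S' Z'')"
      "allB p B''" "subsort S S'" "refines (prefix C Y) (prefix B'' Z'')" by blast
    from IH(1) have "prefix A Z0 = prefix B'' (prefix [AOut p l S'] Z'')" by simp
    from split_pre[OF this] show ?thesis
    proof
      assume "\<exists>D. B'' = A @ D \<and> Z0 = prefix D (prefix [AOut p l S'] Z'')"
      then obtain D where D: "B'' = A @ D" "Z0 = prefix D (prefix [AOut p l S'] Z'')" by blast
      have "Z = prefix (A @ AIn r m R1 # D) (WOut p l S' Z'')" using Z D by simp
      moreover have "allB p (A @ AIn r m R1 # D)" using IH(2) D by simp
      moreover have "refines (prefix (c # C) Y) (prefix (A @ AIn r m R1 # D) Z'')"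
        using Intro_in[OF Z(2) Z(3), of "prefix C Y" "prefix D Z''" m] IH(4) D i by simp
      ultimately show ?thesis using IH(3) by blast
    next
      assume "\<exists>D. A = B'' @ AOut p l S' # D \<and> Z'' = prefix D Z0"
      then show ?thesis using Z(2) by auto
    qed
  next
    case o
    with Cons.prems have "refines (WOut q m R (prefix C (WOut p l S Y))) Z" by simp
    from Inv_out0[OF this] obtain A R1 Z0 where Z: "Z = prefix A (WOut q m R1 Z0)" "allB q A" "subsort R R1"
      "refines (prefix C (WOut p l S Y)) (prefix A Z0)" by blast
    from Cons.IH[OF aC Z(4)] obtain B'' S' Z'' where IH: "prefix A Z0 = prefix B'' (WOut p l S' Z'')"
      "allB p B''" "subsort S S'" "refines (prefix C Y) (prefix B'' Z'')" by blast
    from IH(1) have "prefix A Z0 = prefix B'' (prefix [AOut p l S'] Z'')" by simp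
    from split_pre[OF this] show ?thesis
    proof
      assume "\<exists>D. B'' = A @ D \<and> Z0 = prefix D (prefix [AOut p l S'] Z'')"
      then obtain D where D: "B'' = A @ D" "Z0 = prefix D (prefix [AOut p l S'] Z'')" by blast
      have "Z = prefix (A @ AOut q m R1 # D) (WOut p l S' Z'')" using Z D by simp
      moreover have "allB p (A @ AOut q m R1 # D)" using IH(2) D o by simp
      moreover have "refines (prefix (c # C) Y) (prefix (A @ AOut q m R1 # D) Z'')"
        using Intro_out[OF Z(2) Z(3), of "prefix C Y" "prefix D Z''" m] IH(4) D o by simp
      ultimately show ?thesis using IH(3) by blast
    next
      assume "\<exists>D. A = B'' @ AOut p l S' # D \<and> Z'' = prefix D Z0"
      then obtain D where D: "A = B'' @ AOut p l S' # D" "Z'' = prefix D Z0" by blast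
      have "Z = prefix B'' (WOut p l S' (prefix D (WOut q m R1 Z0)))" using Z D by simp
      moreover have "allB q (B'' @ D)" using Z(2) D by simp
      moreover have "refines (prefix (c # C) Y) (prefix (B'' @ D) (WOut q m R1 Z0))"
        using Intro_out[OF \<open>allB q (B'' @ D)\<close> Z(3), of "prefix C Y" Z0 m] IH(4) D o by simp
      ultimately show ?thesis using IH(2,3) by (metis prefix_append)
    qed
  qed
qed

lemma subsort_trans: "subsort a b \<Longrightarrow> subsort b c \<Longrightarrow> subsort a c"
  unfolding subsort_def by auto

lemma subsort_refl: "subsort a a"
  unfolding subsort_def by auto

lemma refines_trans: "refines X Y \<Longrightarrow> refines Y Z \<Longrightarrow> refines X Z"
proof -
  assume "refines X Y" "refines Y Z"
  then have "\<exists>Y. refines X Y \<and> refines Y Z" by blast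
  then show "refines X Z"
  proof (coinduction arbitrary: X Z)
    case (refines X Z)
    then obtain Y where XY: "refines X Y" and YZ: "refines Y Z" by blast
    show ?case
    proof (cases X)
      case WEnd
      with XY have "Y = WEnd" by (cases rule: refines.cases) auto
      with YZ have "Z = WEnd" by (cases rule: refines.cases) auto
      then show ?thesis using WEnd by simp
    next
      case (WIn p l S X')
      from Inv_in0[OF XY[unfolded WIn]] obtain A S2 Y' where Y: "Y = prefix A (WIn p l S2 Y')" "allA p A"
        "subsort S2 S" "refines X' (prefix A Y')" by blast
      from Push_in[OF Y(2) YZ[unfolded Y(1)]] obtain A' S3 Z' where Z: "Z = prefix A' (WIn p l S3 Z')"
        "allA p A'" "subsort S3 S2" "refines (prefix A Y') (prefix A' Z')" by blast
      have act: "act X' = act (prefix A' Z')" using act_pres[OF Y(4)] act_pres[OF Z(4)] by simp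
      have ss: "subsort S3 S" using subsort_trans Y(3) Z(3) by blast
      show ?thesis
      proof (cases "A' = []")
        case True then show ?thesis using WIn Z Y(4) ss by auto
      next
        case False then show ?thesis using WIn Z Y(4) ss act
          by (auto simp: is_A_allA) (metis Z(4))
      qed
    next
      case (WOut p l S X')
      from Inv_out0[OF XY[unfolded WOut]] obtain A S2 Y' where Y: "Y = prefix A (WOut p l S2 Y')" "allB p A"
        "subsort S S2" "refines X' (prefix A Y')" by blast
      from Push_out[OF Y(2) YZ[unfolded Y(1)]] obtain A' S3 Z' where Z: "Z = prefix A' (WOut p l S3 Z')"
        "allB p A'" "subsort S2 S3" "refines (prefix A Y') (prefix A' Z')" by blast
      have act: "act X' = act (prefix A' Z')" using act_pres[OF Y(4)] act_pres[OF Z(4)] by simp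
      have ss: "subsort S S3" using subsort_trans Y(3) Z(3) by blast
      show ?thesis
      proof (cases "A' = []")
        case True then show ?thesis using WOut Z Y(4) ss by auto
      next
        case False then show ?thesis using WOut Z Y(4) ss act
          by (auto simp: is_B_allB) (metis Z(4))
      qed
    qed
  qed
qed

lemma refines_refl: "refines W W"
proof -
  have "W = W" by simp
  then show ?thesis
  proof (coinduction arbitrary: W rule: refines.coinduct)
    case (refines W)
    show ?case by (cases W) (auto simp: subsort_refl)
  qed
qed



lemma sto_simps[simp]:
  "siso_to_stree WEnd = End"
  "siso_to_stree (WIn p l S W) = Bra p (fmupd l (S, siso_to_stree W) fmempty)"
  "siso_to_stree (WOut p l S W) = Sel p (fmupd l (S, siso_to_stree W) fmempty)"
  by (subst siso_to_stree.code; simp add: fmmap_fmupd)+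

lemma fmupd_single_eq[simp]: "fmupd l a fmempty = fmupd l' b fmempty \<longleftrightarrow> l = l' \<and> a = b"
proof
  assume h: "fmupd l a fmempty = fmupd l' b fmempty"
  then have "fmlookup (fmupd l a fmempty) l = fmlookup (fmupd l' b fmempty) l" by simp
  then show "l = l' \<and> a = b" by (simp split: if_splits)
qed simp

lemma so_dec_sto_End: "so_dec V (siso_to_stree WEnd) \<Longrightarrow> V = End"
  by (auto elim: so_dec.cases)

lemma so_dec_sto_In: "so_dec V (siso_to_stree (WIn p l S X)) \<Longrightarrow>
  \<exists>m V0. V = Bra p m \<and> fmdom m = {|l|} \<and> fmlookup m l = Some (S, V0) \<and> so_dec V0 (siso_to_stree X)"
proof (erule so_dec.cases, goal_cases)
  case (3 m' m p')
  then have m': "m' = fmupd l (S, siso_to_stree X) fmempty" "p' = p" by simp_all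
  with 3 have dm: "fmdom m = {|l|}" by simp
  then have "l |\<in>| fmdom m" by simp
  then obtain S0 V0 where lk: "fmlookup m l = Some (S0, V0)" by (auto simp: fmlookup_dom_iff)
  with 3(4) obtain U where "fmlookup m' l = Some (S0, U)" "so_dec V0 U" by blast
  with m' have "S0 = S" "U = siso_to_stree X" by simp_all
  then show ?case using 3(1) m' dm lk \<open>so_dec V0 U\<close> by blast
qed auto

lemma so_dec_sto_Out: "so_dec V (siso_to_stree (WOut p l S X)) \<Longrightarrow>
  \<exists>m V0. V = Sel p m \<and> fmlookup m l = Some (S, V0) \<and> so_dec V0 (siso_to_stree X)"
  by (erule so_dec.cases) auto

lemma si_dec_sto_End: "si_dec V (siso_to_stree WEnd) \<Longrightarrow> V = End"
  by (auto elim: si_dec.cases)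

lemma si_dec_sto_In: "si_dec V (siso_to_stree (WIn p l S X)) \<Longrightarrow>
  \<exists>m V0. V = Bra p m \<and> fmlookup m l = Some (S, V0) \<and> si_dec V0 (siso_to_stree X)"
  by (erule si_dec.cases) auto

lemma si_dec_sto_Out: "si_dec V (siso_to_stree (WOut p l S X)) \<Longrightarrow>
  \<exists>m V0. V = Sel p m \<and> fmdom m = {|l|} \<and> fmlookup m l = Some (S, V0) \<and> si_dec V0 (siso_to_stree X)"
proof (erule si_dec.cases, goal_cases)
  case (3 m' m p')
  then have m': "m' = fmupd l (S, siso_to_stree X) fmempty" "p' = p" by simp_all
  with 3 have dm: "fmdom m = {|l|}" by simp
  then have "l |\<in>| fmdom m" by simp
  then obtain S0 V0 where lk: "fmlookup m l = Some (S0, V0)" by (auto simp: fmlookup_dom_iff)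
  with 3(4) obtain U where "fmlookup m' l = Some (S0, U)" "si_dec V0 U" by blast
  with m' have "S0 = S" "U = siso_to_stree X" by simp_all
  then show ?case using 3(1) m' dm lk \<open>si_dec V0 U\<close> by blast
qed auto

lemma so_dec_End_sto: "so_dec End (siso_to_stree W) \<Longrightarrow> W = WEnd"
  by (cases W) (auto elim: so_dec.cases)

lemma si_dec_End_sto: "si_dec End (siso_to_stree W) \<Longrightarrow> W = WEnd"
  by (cases W) (auto elim: si_dec.cases)

coinductive compat :: "('p, 'l) siso \<Rightarrow> ('p, 'l) siso \<Rightarrow> bool" where
  c_end: "compat WEnd WEnd"
| c_in: "compat X Y \<Longrightarrow> compat (WIn p l S X) (WIn p l S Y)"
| c_out: "compat X Y \<Longrightarrow> compat (WOut p l S X) (WOut p l S Y)"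
| c_div: "l \<noteq> l' \<Longrightarrow> compat (WOut p l S X) (WOut p l' S' Y)"

lemma compat_paths:
  fixes W W' :: "('p, 'l) siso"
  assumes "so_dec V (siso_to_stree W)" "so_dec V (siso_to_stree W')"
  shows "compat W W'"
proof -
  define R where "R = (\<lambda>W W' :: ('p, 'l) siso. \<exists>V. so_dec V (siso_to_stree W) \<and> so_dec V (siso_to_stree W'))"
  have "R W W'" using assms unfolding R_def by blast
  then show ?thesis
  proof (coinduct rule: compat.coinduct)
    case (compat W W')
    then obtain V where c1: "so_dec V (siso_to_stree W)" and c2: "so_dec V (siso_to_stree W')"
      unfolding R_def by blast
    show ?case
    proof (cases W)
      case WEnd
      then have "V = End" using c1 so_dec_sto_End by blast
      then have "W' = WEnd" using c2 so_dec_End_sto by blast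
      then show ?thesis using WEnd by (intro disjI1) simp
    next
      case (WIn p l S X)
      from so_dec_sto_In[OF c1[unfolded WIn]] obtain m V0 where
        V: "V = Bra p m" "fmdom m = {|l|}" "fmlookup m l = Some (S, V0)" "so_dec V0 (siso_to_stree X)" by blast
      show ?thesis
      proof (cases W')
        case WEnd then show ?thesis using so_dec_sto_End[of V] c2 V(1) by simp
      next
        case (WOut p' l' S' X')
        from so_dec_sto_Out[OF c2[unfolded WOut]] obtain m' where "V = Sel p' m'" by blast
        with V(1) show ?thesis by simp
      next
        case (WIn p' l' S' X')
        from so_dec_sto_In[OF c2[unfolded WIn]] obtain m' V0' where
          V': "V = Bra p' m'" "fmdom m' = {|l'|}" "fmlookup m' l' = Some (S', V0')" "so_dec V0' (siso_to_stree X')" by blast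
        then have "p' = p" "m' = m" using V by auto
        then have "l' = l" using V V' by auto
        then have "S' = S" "V0' = V0" using V V' \<open>m' = m\<close> by auto
        have W1: "W = WIn p l S X" by fact
        have W2: "W' = WIn p l S X'" using WIn \<open>l' = l\<close> \<open>S' = S\<close> \<open>p' = p\<close> by simp
        have RX: "R X X'" unfolding R_def using V(4) V'(4) \<open>V0' = V0\<close> by blast
        show ?thesis
          apply (rule disjI2, rule disjI1)
          apply (rule exI[of _ X], rule exI[of _ X'], rule exI[of _ p], rule exI[of _ l], rule exI[of _ S])
          using W1 W2 RX by simp
      qed
    next
      case (WOut p l S X)
      from so_dec_sto_Out[OF c1[unfolded WOut]] obtain m V0 where
        V: "V = Sel p m" "fmlookup m l = Some (S, V0)" "so_dec V0 (siso_to_stree X)" by blast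
      show ?thesis
      proof (cases W')
        case WEnd then show ?thesis using so_dec_sto_End[of V] c2 V(1) by simp
      next
        case (WIn p' l' S' X')
        from so_dec_sto_In[OF c2[unfolded WIn]] obtain m' where "V = Bra p' m'" by blast
        with V(1) show ?thesis by simp
      next
        case (WOut p' l' S' X')
        from so_dec_sto_Out[OF c2[unfolded WOut]] obtain m' V0' where
          V': "V = Sel p' m'" "fmlookup m' l' = Some (S', V0')" "so_dec V0' (siso_to_stree X')" by blast
        then have "p' = p" "m' = m" using V by auto
        have W1: "W = WOut p l S X" by fact
        show ?thesis
        proof (cases "l' = l")
          case True
          then have "S' = S" "V0' = V0" using V V' \<open>m' = m\<close> by auto
          have W2: "W' = WOut p l S X'" using WOut True \<open>S' = S\<close> \<open>p' = p\<close> by simp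
          have RX: "R X X'" unfolding R_def using V(3) V'(3) \<open>V0' = V0\<close> by blast
          show ?thesis
            apply (rule disjI2, rule disjI2, rule disjI1)
            apply (rule exI[of _ X], rule exI[of _ X'], rule exI[of _ p], rule exI[of _ l], rule exI[of _ S])
            using W1 W2 RX by simp
        next
          case False
          have W2: "W' = WOut p l' S' X'" using WOut \<open>p' = p\<close> by simp
          show ?thesis
            apply (rule disjI2, rule disjI2, rule disjI2)
            apply (rule exI[of _ l], rule exI[of _ l'], rule exI[of _ p], rule exI[of _ S], rule exI[of _ X],
                   rule exI[of _ S'], rule exI[of _ X'])
            using W1 W2 False by simp
        qed
      qed
    qed
  qed
qed

lemma compat_prefix: "compat X Y \<Longrightarrow> compat (prefix A X) (prefix A Y)"
proof (induction A)
  case Nil then show ?case by simp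
next
  case (Cons a A) then show ?case by (cases a) (auto intro: compat.intros)
qed

lemma compat_inv[simp]:
  "compat (WIn p l S X) (WIn p' l' S' Y) \<longleftrightarrow> p = p' \<and> l = l' \<and> S = S' \<and> compat X Y"
  "\<not> compat (WIn p l S X) (WOut p' l' S' Y)"
  "\<not> compat (WOut p l S X) (WIn p' l' S' Y)"
  "compat (WOut p l S X) (WOut p' l' S' Y) \<longleftrightarrow> p = p' \<and> (l \<noteq> l' \<or> (l = l' \<and> S = S' \<and> compat X Y))"
     apply (rule iffI, erule compat.cases, simp_all, blast intro: compat.c_in)
    apply (blast elim: compat.cases)
   apply (blast elim: compat.cases)
  apply (rule iffI, erule compat.cases, simp_all)
  apply (blast intro: compat.c_out compat.c_div)
  done

lemma CStep_in:
  "compat (prefix A (WIn p l S Z0)) (prefix A' (WIn p l' S' Z0')) \<Longrightarrow> allA p A \<Longrightarrow> allA p A' \<Longrightarrow>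
   A = A' \<and> l = l' \<and> S = S' \<and> compat Z0 Z0'"
proof (induction A arbitrary: A')
  case Nil
  then show ?case by (cases A') auto
next
  case (Cons a A)
  then obtain q m R where a: "a = AIn q m R" "q \<noteq> p" by auto
  show ?case
  proof (cases A')
    case Nil then show ?thesis using Cons a by auto
  next
    case (Cons a' A'')
    with Cons.prems obtain q' m' R' where a': "a' = AIn q' m' R'" by auto
    from Cons.prems(1) Cons a a' have "compat (prefix A (WIn p l S Z0)) (prefix A'' (WIn p l' S' Z0'))"
      "q = q'" "m = m'" "R = R'"
      by auto
    with Cons.IH[OF this(1)] Cons.prems Cons a a' show ?thesis by auto
  qed
qed

lemma CStep_out:
  "compat (prefix B (WOut p l S Z0)) (prefix B' (WOut p l S' Z0')) \<Longrightarrow> allB p B \<Longrightarrow> allB p B' \<Longrightarrow>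
   compat (prefix B Z0) (prefix B' Z0')"
proof (induction B arbitrary: B')
  case Nil
  then show ?case
  proof (cases B')
    case (Cons b' B'')
    then show ?thesis using Nil by (cases b') auto
  qed simp
next
  case (Cons b B)
  have cb: "compat (prefix [b] (prefix B (WOut p l S Z0))) (prefix B' (WOut p l S' Z0'))"
    using Cons.prems(1) by (metis prefix_Cons)
  have aB: "allB p B" using Cons.prems(2) by simp
  show ?case
  proof (cases B')
    case Nil
    then show ?thesis using cb Cons.prems(2) by (cases b) auto
  next
    case (Cons b' B'')
    have aB'': "allB p B''" using Cons.prems(3) Cons by simp
    have cb2: "compat (prefix [b] (prefix B (WOut p l S Z0))) (prefix [b'] (prefix B'' (WOut p l S' Z0')))"
      using cb Cons by (metis prefix_Cons)
    show ?thesis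
    proof (cases b)
      case (AIn r m R)
      from cb2 AIn have "b' = b" "compat (prefix B (WOut p l S Z0)) (prefix B'' (WOut p l S' Z0'))"
        by (cases b'; simp)+
      with Cons.IH[OF this(2) aB aB''] Cons AIn show ?thesis by simp
    next
      case (AOut q m R)
      from cb2 AOut obtain m' R' where b': "b' = AOut q m' R'"
        by (cases b'; simp)
      show ?thesis
      proof (cases "m' = m")
        case True
        from cb2 AOut b' True have "R' = R" "compat (prefix B (WOut p l S Z0)) (prefix B'' (WOut p l S' Z0'))"
          by simp_all
        with Cons.IH[OF this(2) aB aB''] Cons AOut b' True show ?thesis by simp
      next
        case False
        then show ?thesis using Cons AOut b' by simp
      qed
    qed
  qed
qed

lemma uniq_label:
  "compat Z Z' \<Longrightarrow> refines (prefix h (WIn p l S X)) Z \<Longrightarrow> refines (prefix h (WIn p l' S' Y)) Z' \<Longrightarrow> l = l'"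
proof (induction h arbitrary: Z Z')
  case Nil
  from Inv_in0[OF Nil(2)[simplified]] obtain A S1 Z0 where Z: "Z = prefix A (WIn p l S1 Z0)" "allA p A" by blast
  from Inv_in0[OF Nil(3)[simplified]] obtain A' S1' Z0' where Z': "Z' = prefix A' (WIn p l' S1' Z0')" "allA p A'" by blast
  have "compat (prefix A (WIn p l S1 Z0)) (prefix A' (WIn p l' S1' Z0'))" using Nil(1) Z(1) Z'(1) by simp
  from CStep_in[OF this Z(2) Z'(2)] show ?case by blast
next
  case (Cons a h)
  show ?case
  proof (cases a)
    case (AIn q m R)
    from Cons.prems(2) AIn have "refines (WIn q m R (prefix h (WIn p l S X))) Z" by simp
    from Inv_in0[OF this] obtain A S1 Z0 where Z: "Z = prefix A (WIn q m S1 Z0)" "allA q A"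
      "refines (prefix h (WIn p l S X)) (prefix A Z0)" by blast
    from Cons.prems(3) AIn have "refines (WIn q m R (prefix h (WIn p l' S' Y))) Z'" by simp
    from Inv_in0[OF this] obtain A' S1' Z0' where Z': "Z' = prefix A' (WIn q m S1' Z0')" "allA q A'"
      "refines (prefix h (WIn p l' S' Y)) (prefix A' Z0')" by blast
    have "compat (prefix A (WIn q m S1 Z0)) (prefix A' (WIn q m S1' Z0'))" using Cons.prems(1) Z(1) Z'(1) by simp
    from CStep_in[OF this Z(2) Z'(2)] have "A = A'" "compat Z0 Z0'" by blast+
    then have "compat (prefix A Z0) (prefix A' Z0')" by (simp add: compat_prefix)
    from Cons.IH[OF this Z(3) Z'(3)] show ?thesis .
  next
    case (AOut q m R)
    from Cons.prems(2) AOut have "refines (WOut q m R (prefix h (WIn p l S X))) Z" by simp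
    from Inv_out0[OF this] obtain A S1 Z0 where Z: "Z = prefix A (WOut q m S1 Z0)" "allB q A"
      "refines (prefix h (WIn p l S X)) (prefix A Z0)" by blast
    from Cons.prems(3) AOut have "refines (WOut q m R (prefix h (WIn p l' S' Y))) Z'" by simp
    from Inv_out0[OF this] obtain A' S1' Z0' where Z': "Z' = prefix A' (WOut q m S1' Z0')" "allB q A'"
      "refines (prefix h (WIn p l' S' Y)) (prefix A' Z0')" by blast
    have "compat (prefix A (WOut q m S1 Z0)) (prefix A' (WOut q m S1' Z0'))" using Cons.prems(1) Z(1) Z'(1) by simp
    from CStep_out[OF this Z(2) Z'(2)] have "compat (prefix A Z0) (prefix A' Z0')" .
    from Cons.IH[OF this Z(3) Z'(3)] show ?thesis .
  qed
qed



definition good :: "('p,'l) stree \<Rightarrow> ('p,'l) action list \<Rightarrow> 'p \<Rightarrow> 'l \<Rightarrow> bool" where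
  "good V3 h p l \<longleftrightarrow> (\<exists>S X W. refines (prefix h (WIn p l S X)) W \<and> so_dec V3 (siso_to_stree W))"

definition pickl :: "('p,'l) stree \<Rightarrow> ('p,'l) action list \<Rightarrow> 'p \<Rightarrow> ('l, sort \<times> ('p,'l) stree) fmap \<Rightarrow> 'l" where
  "pickl V3 h p m = (if \<exists>l. l |\<in>| fmdom m \<and> good V3 h p l then SOME l. l |\<in>| fmdom m \<and> good V3 h p l
                     else SOME l. l |\<in>| fmdom m)"

definition braV :: "'l \<Rightarrow> ('p,'l) action list \<Rightarrow> 'p \<Rightarrow> ('l, sort \<times> ('p,'l) stree) fmap
   \<Rightarrow> ('l, sort \<times> (('p,'l) stree \<times> ('p,'l) action list)) fmap" where
  "braV l h p m = fmupd l (fst (the (fmlookup m l)), (snd (the (fmlookup m l)), h @ [AIn p l (fst (the (fmlookup m l)))])) fmempty"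

definition selV :: "('p,'l) action list \<Rightarrow> 'p \<Rightarrow> ('l, sort \<times> ('p,'l) stree) fmap
   \<Rightarrow> ('l, sort \<times> (('p,'l) stree \<times> ('p,'l) action list)) fmap" where
  "selV h p m = fmmap_keys (\<lambda>l x. (fst x, (snd x, h @ [AOut p l (fst x)]))) m"

primcorec mkV :: "('p,'l) stree \<Rightarrow> ('p,'l) stree \<times> ('p,'l) action list \<Rightarrow> ('p,'l) stree" where
  "mkV V3 st = (case fst st of End \<Rightarrow> End
     | Bra p m \<Rightarrow> Bra p (fmmap (\<lambda>x. (fst x, mkV V3 (snd x))) (braV (pickl V3 (snd st) p m) (snd st) p m))
     | Sel p m \<Rightarrow> Sel p (fmmap (\<lambda>x. (fst x, mkV V3 (snd x))) (selV (snd st) p m)))"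

definition guideB :: "'l \<Rightarrow> ('p,'l) siso \<Rightarrow> ('p,'l) siso" where
  "guideB l W = (case W of WIn _ l' _ W0 \<Rightarrow> if l' = l then W0 else WEnd | _ \<Rightarrow> WEnd)"

definition selU :: "('l, sort \<times> ('p,'l) stree) fmap \<Rightarrow> ('p,'l) siso \<Rightarrow> 'l" where
  "selU m W = (case W of WOut _ l _ _ \<Rightarrow> if l |\<in>| fmdom m then l else SOME l. l |\<in>| fmdom m
                 | _ \<Rightarrow> SOME l. l |\<in>| fmdom m)"

definition guideS :: "('p,'l) siso \<Rightarrow> ('p,'l) siso" where
  "guideS W = (case W of WOut _ _ _ W0 \<Rightarrow> W0 | _ \<Rightarrow> WEnd)"

definition braU :: "('p,'l) siso \<Rightarrow> ('l, sort \<times> ('p,'l) stree) fmap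
   \<Rightarrow> ('l, sort \<times> (('p,'l) stree \<times> ('p,'l) siso)) fmap" where
  "braU G m = fmmap_keys (\<lambda>l x. (fst x, (snd x, guideB l G))) m"

definition selUm :: "('p,'l) siso \<Rightarrow> ('l, sort \<times> ('p,'l) stree) fmap
   \<Rightarrow> ('l, sort \<times> (('p,'l) stree \<times> ('p,'l) siso)) fmap" where
  "selUm G m = (let l = selU m G in fmupd l (fst (the (fmlookup m l)), (snd (the (fmlookup m l)), guideS G)) fmempty)"

primcorec mkU :: "('p,'l) stree \<times> ('p,'l) siso \<Rightarrow> ('p,'l) stree" where
  "mkU st = (case fst st of End \<Rightarrow> End
     | Bra p m \<Rightarrow> Bra p (fmmap (\<lambda>x. (fst x, mkU (snd x))) (braU (snd st) m))
     | Sel p m \<Rightarrow> Sel p (fmmap (\<lambda>x. (fst x, mkU (snd x))) (selUm (snd st) m)))"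

definition lB :: "('p,'l) stree \<times> ('p,'l) stree \<Rightarrow> 'l" where
  "lB st = (SOME l. l |\<in>| fmdom (un_Bra2 (snd st)))"
definition lS :: "('p,'l) stree \<times> ('p,'l) stree \<Rightarrow> 'l" where
  "lS st = (SOME l. l |\<in>| fmdom (un_Sel2 (fst st)))"

primcorec mkW :: "('p,'l) stree \<times> ('p,'l) stree \<Rightarrow> ('p,'l) siso" where
  "mkW st = (case snd st of End \<Rightarrow> WEnd
     | Bra p mv \<Rightarrow> WIn p (lB st) (fst (the (fmlookup mv (lB st))))
          (mkW (snd (the (fmlookup (un_Bra2 (fst st)) (lB st))), snd (the (fmlookup mv (lB st)))))
     | Sel p mv \<Rightarrow> WOut p (lS st) (fst (the (fmlookup (un_Sel2 (fst st)) (lS st))))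
          (mkW (snd (the (fmlookup (un_Sel2 (fst st)) (lS st))), snd (the (fmlookup mv (lS st))))))"


lemma mkV_simps:
  "mkV V3 (End, h) = End"
  "mkV V3 (Bra p m, h) = Bra p (fmmap (\<lambda>x. (fst x, mkV V3 (snd x))) (braV (pickl V3 h p m) h p m))"
  "mkV V3 (Sel p m, h) = Sel p (fmmap (\<lambda>x. (fst x, mkV V3 (snd x))) (selV h p m))"
  by (subst mkV.code; simp)+

lemma mkU_simps:
  "mkU (End, G) = End"
  "mkU (Bra p m, G) = Bra p (fmmap (\<lambda>x. (fst x, mkU (snd x))) (braU G m))"
  "mkU (Sel p m, G) = Sel p (fmmap (\<lambda>x. (fst x, mkU (snd x))) (selUm G m))"
  by (subst mkU.code; simp)+

lemma braV_eq: "fmlookup m l = Some (S, T') \<Longrightarrow> braV l h p m = fmupd l (S, (T', h @ [AIn p l S])) fmempty"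
  unfolding braV_def by simp

lemma selUm_eq: "selU m G = l \<Longrightarrow> fmlookup m l = Some (S, T') \<Longrightarrow> selUm G m = fmupd l (S, (T', guideS G)) fmempty"
  unfolding selUm_def by (simp add: Let_def)

lemma some_dom: "fmdom m \<noteq> {||} \<Longrightarrow> (SOME l. l |\<in>| fmdom m) |\<in>| fmdom m"
  by (rule someI_ex) auto

lemma pickl_in: "fmdom m \<noteq> {||} \<Longrightarrow> pickl V3 h p m |\<in>| fmdom m"
  unfolding pickl_def using some_dom[of m]
  by (auto intro: someI2_ex)

lemma selU_in: "fmdom m \<noteq> {||} \<Longrightarrow> selU m G |\<in>| fmdom m"
  unfolding selU_def using some_dom[of m] by (auto split: siso.splits)

lemma in_dom_lookup: "l |\<in>| fmdom m \<Longrightarrow> \<exists>S T. fmlookup m l = Some (S, T)"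
  by (auto simp: fmlookup_dom_iff)

lemma so_dec_End_inv: "so_dec End U \<Longrightarrow> U = End"
  by (auto elim: so_dec.cases)
lemma si_dec_End_inv: "si_dec End U \<Longrightarrow> U = End"
  by (auto elim: si_dec.cases)

lemma so_dec_Bra_inv: "so_dec (Bra p m) U \<Longrightarrow> \<exists>mu. U = Bra p mu \<and> fmdom mu = fmdom m \<and>
   (\<forall>l S T. fmlookup m l = Some (S, T) \<longrightarrow> (\<exists>U'. fmlookup mu l = Some (S, U') \<and> so_dec T U'))"
  by (erule so_dec.cases) auto

lemma si_dec_Sel_inv: "si_dec (Sel p m) U \<Longrightarrow> \<exists>mu. U = Sel p mu \<and> fmdom mu = fmdom m \<and>
   (\<forall>l S T. fmlookup m l = Some (S, T) \<longrightarrow> (\<exists>U'. fmlookup mu l = Some (S, U') \<and> si_dec T U'))"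
  by (erule si_dec.cases) auto

lemma so_dec_Sel_inv: "so_dec (Sel p m) U \<Longrightarrow> \<exists>l S T U0. fmlookup m l = Some (S, T) \<and>
   U = Sel p (fmupd l (S, U0) fmempty) \<and> so_dec T U0"
  by (erule so_dec.cases) auto

lemma si_dec_Bra_inv: "si_dec (Bra p m) U \<Longrightarrow> \<exists>l S T U0. fmlookup m l = Some (S, T) \<and>
   U = Bra p (fmupd l (S, U0) fmempty) \<and> si_dec T U0"
  by (erule si_dec.cases) auto

lemma so_dec_to_Bra: "so_dec T (Bra p mu) \<Longrightarrow> \<exists>m. T = Bra p m \<and> fmdom mu = fmdom m \<and>
   (\<forall>l S T. fmlookup m l = Some (S, T) \<longrightarrow> (\<exists>U'. fmlookup mu l = Some (S, U') \<and> so_dec T U'))"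
  by (erule so_dec.cases) auto

lemma so_dec_to_Sel: "so_dec T (Sel p mu) \<Longrightarrow> \<exists>m l S T0 U0. T = Sel p m \<and> fmlookup m l = Some (S, T0) \<and>
   mu = fmupd l (S, U0) fmempty \<and> so_dec T0 U0"
  by (erule so_dec.cases) auto

lemma so_dec_to_End: "so_dec T End \<Longrightarrow> T = End"
  by (erule so_dec.cases) auto

lemma wf_Bra_inv: "wf_stree (Bra p m) \<Longrightarrow> fmdom m \<noteq> {||} \<and> (\<forall>l S T. fmlookup m l = Some (S, T) \<longrightarrow> wf_stree T)"
  by (erule wf_stree.cases) auto
lemma wf_Sel_inv: "wf_stree (Sel p m) \<Longrightarrow> fmdom m \<noteq> {||} \<and> (\<forall>l S T. fmlookup m l = Some (S, T) \<longrightarrow> wf_stree T)"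
  by (erule wf_stree.cases) auto


lemma E1:
  assumes "wf_stree T"
  shows "si_dec T (mkV V3 (T, h))"
  using assms
proof (coinduction arbitrary: T h)
  case (si_dec T h)
  show ?case
  proof (cases T)
    case End
    then show ?thesis by (simp add: mkV_simps)
  next
    case (Bra p m)
    have wb: "wf_stree (Bra p m)" using si_dec Bra by simp
    note wb2 = wf_Bra_inv[OF wb]
    have ne: "fmdom m \<noteq> {||}" using wb2 by (rule conjunct1)
    have wch: "\<forall>l S T. fmlookup m l = Some (S, T) \<longrightarrow> wf_stree T" using wb2 by (rule conjunct2)
    define l where "l = pickl V3 h p m"
    have ld: "l |\<in>| fmdom m" unfolding l_def by (rule pickl_in[OF ne])
    obtain S T' where lk: "fmlookup m l = Some (S, T')" using in_dom_lookup[OF ld] by blast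
    have eq: "mkV V3 (T, h) = Bra p (fmupd l (S, mkV V3 (T', h @ [AIn p l S])) fmempty)"
      using Bra by (simp add: mkV_simps braV_eq[OF lk] fmmap_fmupd l_def[symmetric])
    have wT: "wf_stree T'" using wch lk by blast
    show ?thesis
      apply (rule disjI2, rule disjI1)
      apply (rule exI[of _ m], rule exI[of _ l], rule exI[of _ S], rule exI[of _ T'],
             rule exI[of _ "mkV V3 (T', h @ [AIn p l S])"], rule exI[of _ p])
      using Bra eq lk wT by blast
  next
    case (Sel p m)
    have wb: "wf_stree (Sel p m)" using si_dec Sel by simp
    note wb2 = wf_Sel_inv[OF wb]
    have wch: "\<forall>l S T. fmlookup m l = Some (S, T) \<longrightarrow> wf_stree T" using wb2 by (rule conjunct2)
    define mm where "mm = fmmap (\<lambda>x. (fst x, mkV V3 (snd x))) (selV h p m)"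
    have eq: "mkV V3 (T, h) = Sel p mm" using Sel by (simp add: mkV_simps mm_def)
    have dom: "fmdom mm = fmdom m" by (simp add: mm_def selV_def)
    have lk: "\<And>l S T'. fmlookup m l = Some (S, T') \<Longrightarrow> fmlookup mm l = Some (S, mkV V3 (T', h @ [AOut p l S]))"
      by (simp add: mm_def selV_def)
    have all: "\<forall>l S T'. fmlookup m l = Some (S, T') \<longrightarrow> (\<exists>V. fmlookup mm l = Some (S, V) \<and>
                  ((\<exists>Ta h. T' = Ta \<and> V = mkV V3 (Ta, h) \<and> wf_stree Ta) \<or> si_dec T' V))"
    proof (intro allI impI)
      fix l S T' assume a: "fmlookup m l = Some (S, T')"
      show "\<exists>V. fmlookup mm l = Some (S, V) \<and> ((\<exists>Ta h. T' = Ta \<and> V = mkV V3 (Ta, h) \<and> wf_stree Ta) \<or> si_dec T' V)"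
        apply (rule exI[of _ "mkV V3 (T', h @ [AOut p l S])"])
        using lk[OF a] wch a by blast
    qed
    show ?thesis
      apply (rule disjI2, rule disjI2)
      apply (rule exI[of _ mm], rule exI[of _ m], rule exI[of _ p])
      using Sel eq dom all by blast
  qed
qed

lemma good_uniq:
  assumes "good V3 h p l1" "good V3 h p l2"
  shows "l1 = l2"
proof -
  from assms(1) obtain S1 X1 W1 where 1: "refines (prefix h (WIn p l1 S1 X1)) W1" "so_dec V3 (siso_to_stree W1)"
    unfolding good_def by blast
  from assms(2) obtain S2 X2 W2 where 2: "refines (prefix h (WIn p l2 S2 X2)) W2" "so_dec V3 (siso_to_stree W2)"
    unfolding good_def by blast
  have "compat W1 W2" using compat_paths[OF 1(2) 2(2)] .
  from uniq_label[OF this 1(1) 2(1)] show ?thesis .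
qed

lemma pickl_good: "l |\<in>| fmdom m \<Longrightarrow> good V3 h p l \<Longrightarrow> pickl V3 h p m = l"
proof -
  assume a: "l |\<in>| fmdom m" "good V3 h p l"
  then have ex: "\<exists>l. l |\<in>| fmdom m \<and> good V3 h p l" by blast
  then have "pickl V3 h p m = (SOME l. l |\<in>| fmdom m \<and> good V3 h p l)" unfolding pickl_def by simp
  moreover have "good V3 h p (SOME l. l |\<in>| fmdom m \<and> good V3 h p l)"
    using someI_ex[OF ex] by blast
  ultimately show ?thesis using good_uniq a(2) by metis
qed

coinductive tpath :: "('p, 'l) stree \<Rightarrow> ('p, 'l) siso \<Rightarrow> bool" where
  tp_end: "tpath End WEnd"
| tp_bra: "fmlookup m l = Some (S, T) \<Longrightarrow> tpath T X \<Longrightarrow> tpath (Bra p m) (WIn p l S X)"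
| tp_sel: "fmlookup m l = Some (S, T) \<Longrightarrow> tpath T X \<Longrightarrow> tpath (Sel p m) (WOut p l S X)"

lemma E2:
  assumes "tpath T X" "refines (prefix h X) W" "so_dec V3 (siso_to_stree W)"
  shows "so_dec (mkV V3 (T, h)) (siso_to_stree X)"
  using assms
proof (coinduction arbitrary: T h X W)
  case (so_dec T h X W)
  from so_dec(1) show ?case
  proof (cases rule: tpath.cases)
    case tp_end
    then show ?thesis by (simp add: mkV_simps)
  next
    case (tp_bra m l S T0 X0 p)
    have "good V3 h p l" unfolding good_def using so_dec(2,3) tp_bra by blast
    moreover have "l |\<in>| fmdom m" using tp_bra by (auto simp: fmlookup_dom_iff)
    ultimately have pk: "pickl V3 h p m = l" by (rule pickl_good[rotated])
    have eq: "mkV V3 (T, h) = Bra p (fmupd l (S, mkV V3 (T0, h @ [AIn p l S])) fmempty)"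
      using tp_bra by (simp add: mkV_simps braV_eq[OF tp_bra(3)] fmmap_fmupd pk)
    have X: "siso_to_stree X = Bra p (fmupd l (S, siso_to_stree X0) fmempty)" using tp_bra by simp
    have r: "refines (prefix (h @ [AIn p l S]) X0) W" using so_dec(2) tp_bra by simp
    have all: "\<forall>l' S' T'. fmlookup (fmupd l (S, mkV V3 (T0, h @ [AIn p l S])) fmempty) l' = Some (S', T') \<longrightarrow>
       (\<exists>U. fmlookup (fmupd l (S, siso_to_stree X0) fmempty) l' = Some (S', U) \<and>
          ((\<exists>Ta h X W. T' = mkV V3 (Ta, h) \<and> U = siso_to_stree X \<and> tpath Ta X \<and> refines (prefix h X) W
              \<and> so_dec V3 (siso_to_stree W)) \<or> so_dec T' U))"
    proof (intro allI impI)
      fix l' S' T' assume a: "fmlookup (fmupd l (S, mkV V3 (T0, h @ [AIn p l S])) fmempty) l' = Some (S', T')"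
      then have "l' = l" "S' = S" "T' = mkV V3 (T0, h @ [AIn p l S])" by (auto split: if_splits)
      then show "\<exists>U. fmlookup (fmupd l (S, siso_to_stree X0) fmempty) l' = Some (S', U) \<and>
          ((\<exists>Ta h X W. T' = mkV V3 (Ta, h) \<and> U = siso_to_stree X \<and> tpath Ta X \<and> refines (prefix h X) W
              \<and> so_dec V3 (siso_to_stree W)) \<or> so_dec T' U)"
        apply (intro exI[of _ "siso_to_stree X0"] conjI)
         apply simp
        apply (rule disjI1)
        using r tp_bra(4) so_dec(3) by blast
    qed
    show ?thesis
      apply (rule disjI2, rule disjI2)
      apply (rule exI[of _ "fmupd l (S, siso_to_stree X0) fmempty"],
             rule exI[of _ "fmupd l (S, mkV V3 (T0, h @ [AIn p l S])) fmempty"], rule exI[of _ p])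
      using eq X all by simp
  next
    case (tp_sel m l S T0 X0 p)
    define mm where "mm = fmmap (\<lambda>x. (fst x, mkV V3 (snd x))) (selV h p m)"
    have eq: "mkV V3 (T, h) = Sel p mm" using tp_sel by (simp add: mkV_simps mm_def)
    have lk: "fmlookup mm l = Some (S, mkV V3 (T0, h @ [AOut p l S]))"
      using tp_sel by (simp add: mm_def selV_def)
    have X: "siso_to_stree X = Sel p (fmupd l (S, siso_to_stree X0) fmempty)" using tp_sel by simp
    have r: "refines (prefix (h @ [AOut p l S]) X0) W" using so_dec(2) tp_sel by simp
    show ?thesis
      apply (rule disjI2, rule disjI1)
      apply (rule exI[of _ mm], rule exI[of _ l], rule exI[of _ S], rule exI[of _ "mkV V3 (T0, h @ [AOut p l S])"],
             rule exI[of _ "siso_to_stree X0"], rule exI[of _ p])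
      using eq X r lk tp_sel(4) so_dec(3) by blast
  qed
qed


lemma F1:
  assumes "wf_stree T"
  shows "so_dec T (mkU (T, G))"
  using assms
proof (coinduction arbitrary: T G)
  case (so_dec T G)
  show ?case
  proof (cases T)
    case End
    then show ?thesis by (simp add: mkU_simps)
  next
    case (Sel p m)
    have wb: "wf_stree (Sel p m)" using so_dec Sel by simp
    note wb2 = wf_Sel_inv[OF wb]
    have ne: "fmdom m \<noteq> {||}" using wb2 by (rule conjunct1)
    have wch: "\<forall>l S T. fmlookup m l = Some (S, T) \<longrightarrow> wf_stree T" using wb2 by (rule conjunct2)
    define l where "l = selU m G"
    have ld: "l |\<in>| fmdom m" unfolding l_def by (rule selU_in[OF ne])
    obtain S T' where lk: "fmlookup m l = Some (S, T')" using in_dom_lookup[OF ld] by blast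
    have eq: "mkU (T, G) = Sel p (fmupd l (S, mkU (T', guideS G)) fmempty)"
      using Sel by (simp add: mkU_simps selUm_eq[OF l_def[symmetric] lk] fmmap_fmupd)
    have wT: "wf_stree T'" using wch lk by blast
    show ?thesis
      apply (rule disjI2, rule disjI1)
      apply (rule exI[of _ m], rule exI[of _ l], rule exI[of _ S], rule exI[of _ T'],
             rule exI[of _ "mkU (T', guideS G)"], rule exI[of _ p])
      apply (intro conjI)
         apply (rule Sel)
        apply (rule eq)
       apply (rule lk)
      apply (rule disjI1, rule exI[of _ T'], rule exI[of _ "guideS G"])
      using wT by simp
  next
    case (Bra p m)
    have wb: "wf_stree (Bra p m)" using so_dec Bra by simp
    note wb2 = wf_Bra_inv[OF wb]
    have wch: "\<forall>l S T. fmlookup m l = Some (S, T) \<longrightarrow> wf_stree T" using wb2 by (rule conjunct2)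
    define mm where "mm = fmmap (\<lambda>x. (fst x, mkU (snd x))) (braU G m)"
    have eq: "mkU (T, G) = Bra p mm" using Bra by (simp add: mkU_simps mm_def)
    have dom: "fmdom mm = fmdom m" by (simp add: mm_def braU_def)
    have lk: "\<And>l S T'. fmlookup m l = Some (S, T') \<Longrightarrow> fmlookup mm l = Some (S, mkU (T', guideB l G))"
      by (simp add: mm_def braU_def)
    have all: "\<forall>l S T'. fmlookup m l = Some (S, T') \<longrightarrow> (\<exists>U. fmlookup mm l = Some (S, U) \<and>
                  ((\<exists>Ta G. T' = Ta \<and> U = mkU (Ta, G) \<and> wf_stree Ta) \<or> so_dec T' U))"
    proof (intro allI impI)
      fix l S T' assume a: "fmlookup m l = Some (S, T')"
      show "\<exists>U. fmlookup mm l = Some (S, U) \<and> ((\<exists>Ta G. T' = Ta \<and> U = mkU (Ta, G) \<and> wf_stree Ta) \<or> so_dec T' U)"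
        apply (rule exI[of _ "mkU (T', guideB l G)"])
        apply (intro conjI)
         apply (rule lk[OF a])
        apply (rule disjI1, rule exI[of _ T'], rule exI[of _ "guideB l G"])
        using wch a by simp
    qed
    show ?thesis
      apply (rule disjI2, rule disjI2)
      apply (rule exI[of _ mm], rule exI[of _ m], rule exI[of _ p])
      apply (intro conjI)
         apply (rule Bra)
        apply (rule eq)
       apply (rule dom)
      by (rule all)
  qed
qed

lemma tpath_dec:
  assumes "so_dec T U" "si_dec U (siso_to_stree X)"
  shows "tpath T X"
  using assms
proof (coinduction arbitrary: T U X)
  case (tpath T U X)
  show ?case
  proof (cases X)
    case WEnd
    then have "U = End" using tpath(2) si_dec_sto_End by blast
    then have "T = End" using tpath(1) so_dec_to_End by blast
    then show ?thesis using WEnd by simp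
  next
    case (WIn p l S X0)
    from si_dec_sto_In[OF tpath(2)[unfolded WIn]] obtain mu U0 where
      U: "U = Bra p mu" "fmlookup mu l = Some (S, U0)" "si_dec U0 (siso_to_stree X0)" by blast
    from so_dec_to_Bra[OF tpath(1)[unfolded U(1)]] obtain m where
      T: "T = Bra p m" "fmdom mu = fmdom m"
      "\<forall>l S T. fmlookup m l = Some (S, T) \<longrightarrow> (\<exists>U'. fmlookup mu l = Some (S, U') \<and> so_dec T U')" by blast
    have "l |\<in>| fmdom m" using U(2) T(2) by (metis fmdomI)
    then obtain S' T0 where lk: "fmlookup m l = Some (S', T0)" using in_dom_lookup[of l m] by blast
    with T(3) obtain U' where "fmlookup mu l = Some (S', U')" "so_dec T0 U'" by blast
    with U(2) have "S' = S" "so_dec T0 U0" by auto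
    show ?thesis
      apply (rule disjI2, rule disjI1)
      apply (rule exI[of _ m], rule exI[of _ l], rule exI[of _ S], rule exI[of _ T0],
             rule exI[of _ X0], rule exI[of _ p])
      apply (intro conjI)
         apply (rule T(1))
        apply (rule WIn)
      using lk \<open>S' = S\<close> apply simp
      apply (rule disjI1)
      using \<open>so_dec T0 U0\<close> U(3) by blast
  next
    case (WOut p l S X0)
    from si_dec_sto_Out[OF tpath(2)[unfolded WOut]] obtain mu U0 where
      U: "U = Sel p mu" "fmdom mu = {|l|}" "fmlookup mu l = Some (S, U0)" "si_dec U0 (siso_to_stree X0)" by blast
    from so_dec_to_Sel[OF tpath(1)[unfolded U(1)]] obtain m l' S' T0 U0' where
      T: "T = Sel p m" "fmlookup m l' = Some (S', T0)" "mu = fmupd l' (S', U0') fmempty" "so_dec T0 U0'" by blast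
    from T(3) U(2,3) have "l' = l" "S' = S" "U0' = U0" by (auto split: if_splits)
    show ?thesis
      apply (rule disjI2, rule disjI2)
      apply (rule exI[of _ m], rule exI[of _ l], rule exI[of _ S], rule exI[of _ T0],
             rule exI[of _ X0], rule exI[of _ p])
      apply (intro conjI)
         apply (rule T(1))
        apply (rule WOut)
      using T(2) \<open>l' = l\<close> \<open>S' = S\<close> apply simp
      apply (rule disjI1)
      using T(4) \<open>U0' = U0\<close> U(4) by blast
  qed
qed


lemma G_step:
  assumes a1: "si_dec T V" and a2: "so_dec V (siso_to_stree Y)" and a3: "so_dec V (siso_to_stree X)"
    and a4: "si_dec (mkU (T, Y)) (siso_to_stree X)"
  shows "(X = WEnd \<and> Y = WEnd) \<or>
    (\<exists>p l S X0 Y0 T0 V0. X = WIn p l S X0 \<and> Y = WIn p l S Y0 \<and> si_dec T0 V0 \<and>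
        so_dec V0 (siso_to_stree Y0) \<and> so_dec V0 (siso_to_stree X0) \<and> si_dec (mkU (T0, Y0)) (siso_to_stree X0)) \<or>
    (\<exists>p l S X0 Y0 T0 V0. X = WOut p l S X0 \<and> Y = WOut p l S Y0 \<and> si_dec T0 V0 \<and>
        so_dec V0 (siso_to_stree Y0) \<and> so_dec V0 (siso_to_stree X0) \<and> si_dec (mkU (T0, Y0)) (siso_to_stree X0))"
proof (cases T)
  case End
  then have "V = End" using a1 si_dec_End_inv by blast
  then have "Y = WEnd" "X = WEnd" using a2 a3 so_dec_End_sto by blast+
  then show ?thesis by simp
next
  case (Bra p m)
  from si_dec_Bra_inv[OF a1[unfolded Bra]] obtain l S T0 V0 where
    V: "fmlookup m l = Some (S, T0)" "V = Bra p (fmupd l (S, V0) fmempty)" "si_dec T0 V0" by blast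
  have Yc: "\<exists>Y0. Y = WIn p l S Y0 \<and> so_dec V0 (siso_to_stree Y0)" if b: "so_dec V (siso_to_stree Y)" for Y
  proof (cases Y)
    case WEnd then show ?thesis using b V(2) so_dec_sto_End[of V] by simp
  next
    case (WOut p' l' S' Y0)
    from so_dec_sto_Out[OF b[unfolded WOut]] obtain mm where "V = Sel p' mm" by blast
    then show ?thesis using V(2) by simp
  next
    case (WIn p' l' S' Y0)
    from so_dec_sto_In[OF b[unfolded WIn]] obtain mm V0' where
      Y: "V = Bra p' mm" "fmdom mm = {|l'|}" "fmlookup mm l' = Some (S', V0')" "so_dec V0' (siso_to_stree Y0)" by blast
    from Y(1) V(2) have "p' = p" "mm = fmupd l (S, V0) fmempty" by simp_all
    with Y(2) have "l' = l" by simp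
    with Y(3) \<open>mm = _\<close> have "S' = S" "V0' = V0" by simp_all
    then show ?thesis using WIn \<open>p' = p\<close> \<open>l' = l\<close> Y(4) by simp
  qed
  from Yc[OF a2] obtain Y0 where Y: "Y = WIn p l S Y0" "so_dec V0 (siso_to_stree Y0)" by blast
  from Yc[OF a3] obtain X0 where X: "X = WIn p l S X0" "so_dec V0 (siso_to_stree X0)" by blast
  define mm where "mm = fmmap (\<lambda>x. (fst x, mkU (snd x))) (braU Y m)"
  have eq: "mkU (T, Y) = Bra p mm" using Bra by (simp add: mkU_simps mm_def)
  have gb: "guideB l Y = Y0" using Y(1) by (simp add: guideB_def)
  have lk: "fmlookup mm l = Some (S, mkU (T0, Y0))" using V(1) gb by (simp add: mm_def braU_def)
  from si_dec_sto_In[OF a4[unfolded eq X(1)]] obtain mu U0 where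
    U: "Bra p mm = Bra p mu" "fmlookup mu l = Some (S, U0)" "si_dec U0 (siso_to_stree X0)" by blast
  from U(1,2) lk have "U0 = mkU (T0, Y0)" by simp
  with U(3) have sX: "si_dec (mkU (T0, Y0)) (siso_to_stree X0)" by simp
  show ?thesis
    apply (rule disjI2, rule disjI1)
    apply (rule exI[of _ p], rule exI[of _ l], rule exI[of _ S], rule exI[of _ X0], rule exI[of _ Y0],
           rule exI[of _ T0], rule exI[of _ V0])
    using X Y V(3) sX by simp
next
  case (Sel p m)
  from si_dec_Sel_inv[OF a1[unfolded Sel]] obtain mv where
    V: "V = Sel p mv" "fmdom mv = fmdom m"
    "\<forall>l S T. fmlookup m l = Some (S, T) \<longrightarrow> (\<exists>U'. fmlookup mv l = Some (S, U') \<and> si_dec T U')" by blast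
  obtain l S Y0 V0 where Y: "Y = WOut p l S Y0" "fmlookup mv l = Some (S, V0)" "so_dec V0 (siso_to_stree Y0)"
  proof (cases Y)
    case WEnd then show ?thesis using a2 V(1) so_dec_sto_End[of V] by simp
  next
    case (WIn p' l' S' Y0)
    from so_dec_sto_In[OF a2[unfolded WIn]] obtain mm where "V = Bra p' mm" by blast
    then show ?thesis using V(1) by simp
  next
    case (WOut p' l' S' Y0)
    from so_dec_sto_Out[OF a2[unfolded WOut]] obtain mm V0' where
      Y: "V = Sel p' mm" "fmlookup mm l' = Some (S', V0')" "so_dec V0' (siso_to_stree Y0)" by blast
    from Y(1) V(1) have "p' = p" "mm = mv" by simp_all
    then show ?thesis using that WOut Y by simp
  qed
  have "l |\<in>| fmdom m" using Y(2) V(2) by (metis fmdomI)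
  then obtain S'' T0 where lkm: "fmlookup m l = Some (S'', T0)" using in_dom_lookup[of l m] by blast
  with V(3) obtain V' where "fmlookup mv l = Some (S'', V')" "si_dec T0 V'" by blast
  with Y(2) have "S'' = S" "V' = V0" by simp_all
  have sT: "si_dec T0 V0" using \<open>si_dec T0 V'\<close> \<open>V' = V0\<close> by simp
  have su: "selU m Y = l" using Y(1) \<open>l |\<in>| fmdom m\<close> by (simp add: selU_def)
  have gs: "guideS Y = Y0" using Y(1) by (simp add: guideS_def)
  have lkm': "fmlookup m l = Some (S, T0)" using lkm \<open>S'' = S\<close> by simp
  have eq: "mkU (T, Y) = Sel p (fmupd l (S, mkU (T0, Y0)) fmempty)"
    using Sel by (simp add: mkU_simps selUm_eq[OF su lkm'] fmmap_fmupd gs)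
  obtain X0 where X: "X = WOut p l S X0" "si_dec (mkU (T0, Y0)) (siso_to_stree X0)"
  proof (cases X)
    case WEnd then show ?thesis using a4 eq si_dec_sto_End[of "mkU (T, Y)"] by simp
  next
    case (WIn p' l' S' X0)
    from si_dec_sto_In[OF a4[unfolded WIn]] obtain mm where "mkU (T, Y) = Bra p' mm" by blast
    then show ?thesis using eq by simp
  next
    case (WOut p' l' S' X0)
    from si_dec_sto_Out[OF a4[unfolded WOut]] obtain mm U0 where
      U: "mkU (T, Y) = Sel p' mm" "fmdom mm = {|l'|}" "fmlookup mm l' = Some (S', U0)" "si_dec U0 (siso_to_stree X0)"
      by blast
    from U(1) eq have "p' = p" "mm = fmupd l (S, mkU (T0, Y0)) fmempty" by simp_all
    with U(2) have "l' = l" by simp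
    with U(3) \<open>mm = _\<close> have "S' = S" "U0 = mkU (T0, Y0)" by simp_all
    then show ?thesis using that WOut \<open>p' = p\<close> \<open>l' = l\<close> U(4) by simp
  qed
  from so_dec_sto_Out[OF a3[unfolded X(1)]] obtain mm V0' where
    XX: "V = Sel p mm" "fmlookup mm l = Some (S, V0')" "so_dec V0' (siso_to_stree X0)" by blast
  from XX(1) V(1) have "mm = mv" by simp
  with XX(2) Y(2) have "V0' = V0" by simp
  show ?thesis
    apply (intro disjI2)
    apply (rule exI[of _ p], rule exI[of _ l], rule exI[of _ S], rule exI[of _ X0], rule exI[of _ Y0],
           rule exI[of _ T0], rule exI[of _ V0])
    using X Y sT XX(3) \<open>V0' = V0\<close> by simp
qed

lemma G_eq:
  assumes "si_dec T V" "so_dec V (siso_to_stree Y)" "so_dec V (siso_to_stree X)"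
    "si_dec (mkU (T, Y)) (siso_to_stree X)"
  shows "X = Y"
proof -
  define R where "R = (\<lambda>X Y :: ('a, 'b) siso. \<exists>T V. si_dec T V \<and> so_dec V (siso_to_stree Y) \<and>
      so_dec V (siso_to_stree X) \<and> si_dec (mkU (T, Y)) (siso_to_stree X))"
  have "R X Y" unfolding R_def using assms by blast
  then show ?thesis
  proof (coinduct rule: siso.coinduct)
    case (Eq_siso X Y)
    then obtain T V where "si_dec T V" "so_dec V (siso_to_stree Y)" "so_dec V (siso_to_stree X)"
      "si_dec (mkU (T, Y)) (siso_to_stree X)" unfolding R_def by blast
    from G_step[OF this] consider (e) "X = WEnd \<and> Y = WEnd"
      | (i) p l S X0 Y0 T0 V0 where "X = WIn p l S X0 \<and> Y = WIn p l S Y0 \<and> si_dec T0 V0 \<and>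
        so_dec V0 (siso_to_stree Y0) \<and> so_dec V0 (siso_to_stree X0) \<and> si_dec (mkU (T0, Y0)) (siso_to_stree X0)"
      | (o) p l S X0 Y0 T0 V0 where "X = WOut p l S X0 \<and> Y = WOut p l S Y0 \<and> si_dec T0 V0 \<and>
        so_dec V0 (siso_to_stree Y0) \<and> so_dec V0 (siso_to_stree X0) \<and> si_dec (mkU (T0, Y0)) (siso_to_stree X0)"
      by blast
    then show ?case
    proof cases
      case e then show ?thesis by simp
    next
      case i
      have "R X0 Y0" unfolding R_def using i by blast
      then show ?thesis using i by simp
    next
      case o
      have "R X0 Y0" unfolding R_def using o by blast
      then show ?thesis using o by simp
    qed
  qed
qed


lemma mkW_End: "mkW (U, End) = WEnd"
  by (subst mkW.code) simp

lemma mkW_Bra: "fmlookup mu l = Some (S', U0) \<Longrightarrow>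
  mkW (Bra p mu, Bra p (fmupd l (S, V0) fmempty)) = WIn p l S (mkW (U0, V0))"
  by (subst mkW.code) (simp add: lB_def)

lemma mkW_Sel: "fmlookup mv l = Some (S', V0) \<Longrightarrow>
  mkW (Sel p (fmupd l (S, U0) fmempty), Sel p mv) = WOut p l S (mkW (U0, V0))"
  by (subst mkW.code) (simp add: lS_def)

lemma R_si:
  assumes "so_dec T U" "si_dec T V"
  shows "si_dec U (siso_to_stree (mkW (U, V)))"
  using assms
proof (coinduction arbitrary: T U V)
  case (si_dec T U V)
  show ?case
  proof (cases T)
    case End
    then have "U = End" "V = End" using si_dec so_dec_End_inv si_dec_End_inv by blast+
    then show ?thesis by (simp add: mkW_End)
  next
    case (Bra p m)
    from so_dec_Bra_inv[OF si_dec(1)[unfolded Bra]] obtain mu where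
      U: "U = Bra p mu" "fmdom mu = fmdom m"
      "\<forall>l S T. fmlookup m l = Some (S, T) \<longrightarrow> (\<exists>U'. fmlookup mu l = Some (S, U') \<and> so_dec T U')" by blast
    from si_dec_Bra_inv[OF si_dec(2)[unfolded Bra]] obtain l S T0 V0 where
      V: "fmlookup m l = Some (S, T0)" "V = Bra p (fmupd l (S, V0) fmempty)" "si_dec T0 V0" by blast
    from U(3) V(1) obtain U0 where U0: "fmlookup mu l = Some (S, U0)" "so_dec T0 U0" by blast
    have eq: "siso_to_stree (mkW (U, V)) = Bra p (fmupd l (S, siso_to_stree (mkW (U0, V0))) fmempty)"
      using U(1) V(2) mkW_Bra[OF U0(1)] by simp
    show ?thesis
      apply (rule disjI2, rule disjI1)
      apply (rule exI[of _ mu], rule exI[of _ l], rule exI[of _ S], rule exI[of _ U0],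
             rule exI[of _ "siso_to_stree (mkW (U0, V0))"], rule exI[of _ p])
      apply (intro conjI)
         apply (rule U(1))
        apply (rule eq)
       apply (rule U0(1))
      apply (rule disjI1)
      using U0(2) V(3) by blast
  next
    case (Sel p m)
    from so_dec_Sel_inv[OF si_dec(1)[unfolded Sel]] obtain l S T0 U0 where
      U: "fmlookup m l = Some (S, T0)" "U = Sel p (fmupd l (S, U0) fmempty)" "so_dec T0 U0" by blast
    from si_dec_Sel_inv[OF si_dec(2)[unfolded Sel]] obtain mv where
      V: "V = Sel p mv" "fmdom mv = fmdom m"
      "\<forall>l S T. fmlookup m l = Some (S, T) \<longrightarrow> (\<exists>U'. fmlookup mv l = Some (S, U') \<and> si_dec T U')" by blast
    from V(3) U(1) obtain V0 where V0: "fmlookup mv l = Some (S, V0)" "si_dec T0 V0" by blast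
    have eq: "siso_to_stree (mkW (U, V)) = Sel p (fmupd l (S, siso_to_stree (mkW (U0, V0))) fmempty)"
      using U(2) V(1) mkW_Sel[OF V0(1)] by simp
    have all: "\<forall>l' S' T'. fmlookup (fmupd l (S, U0) fmempty) l' = Some (S', T') \<longrightarrow>
        (\<exists>V'. fmlookup (fmupd l (S, siso_to_stree (mkW (U0, V0))) fmempty) l' = Some (S', V') \<and>
          ((\<exists>T U V. T' = U \<and> V' = siso_to_stree (mkW (U, V)) \<and> so_dec T U \<and> si_dec T V) \<or> si_dec T' V'))"
    proof (intro allI impI)
      fix l' S' T' assume a: "fmlookup (fmupd l (S, U0) fmempty) l' = Some (S', T')"
      then have "l' = l" "S' = S" "T' = U0" by (auto split: if_splits)
      then show "\<exists>V'. fmlookup (fmupd l (S, siso_to_stree (mkW (U0, V0))) fmempty) l' = Some (S', V') \<and>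
          ((\<exists>T U V. T' = U \<and> V' = siso_to_stree (mkW (U, V)) \<and> so_dec T U \<and> si_dec T V) \<or> si_dec T' V')"
        apply (intro exI[of _ "siso_to_stree (mkW (U0, V0))"] conjI)
         apply simp
        apply (rule disjI1)
        using U(3) V0(2) by blast
    qed
    show ?thesis
      apply (rule disjI2, rule disjI2)
      apply (rule exI[of _ "fmupd l (S, siso_to_stree (mkW (U0, V0))) fmempty"],
             rule exI[of _ "fmupd l (S, U0) fmempty"], rule exI[of _ p])
      apply (intro conjI)
         apply (rule U(2))
        apply (rule eq)
       apply simp
      by (rule all)
  qed
qed

lemma R_so:
  assumes "so_dec T U" "si_dec T V"
  shows "so_dec V (siso_to_stree (mkW (U, V)))"
  using assms
proof (coinduction arbitrary: T U V)
  case (so_dec T U V)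
  show ?case
  proof (cases T)
    case End
    then have "U = End" "V = End" using so_dec so_dec_End_inv si_dec_End_inv by blast+
    then show ?thesis by (simp add: mkW_End)
  next
    case (Bra p m)
    from so_dec_Bra_inv[OF so_dec(1)[unfolded Bra]] obtain mu where
      U: "U = Bra p mu" "fmdom mu = fmdom m"
      "\<forall>l S T. fmlookup m l = Some (S, T) \<longrightarrow> (\<exists>U'. fmlookup mu l = Some (S, U') \<and> so_dec T U')" by blast
    from si_dec_Bra_inv[OF so_dec(2)[unfolded Bra]] obtain l S T0 V0 where
      V: "fmlookup m l = Some (S, T0)" "V = Bra p (fmupd l (S, V0) fmempty)" "si_dec T0 V0" by blast
    from U(3) V(1) obtain U0 where U0: "fmlookup mu l = Some (S, U0)" "so_dec T0 U0" by blast
    have eq: "siso_to_stree (mkW (U, V)) = Bra p (fmupd l (S, siso_to_stree (mkW (U0, V0))) fmempty)"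
      using U(1) V(2) mkW_Bra[OF U0(1)] by simp
    have all: "\<forall>l' S' T'. fmlookup (fmupd l (S, V0) fmempty) l' = Some (S', T') \<longrightarrow>
        (\<exists>V'. fmlookup (fmupd l (S, siso_to_stree (mkW (U0, V0))) fmempty) l' = Some (S', V') \<and>
          ((\<exists>T U V. T' = V \<and> V' = siso_to_stree (mkW (U, V)) \<and> so_dec T U \<and> si_dec T V) \<or> so_dec T' V'))"
    proof (intro allI impI)
      fix l' S' T' assume a: "fmlookup (fmupd l (S, V0) fmempty) l' = Some (S', T')"
      then have "l' = l" "S' = S" "T' = V0" by (auto split: if_splits)
      then show "\<exists>V'. fmlookup (fmupd l (S, siso_to_stree (mkW (U0, V0))) fmempty) l' = Some (S', V') \<and>
          ((\<exists>T U V. T' = V \<and> V' = siso_to_stree (mkW (U, V)) \<and> so_dec T U \<and> si_dec T V) \<or> so_dec T' V')"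
        apply (intro exI[of _ "siso_to_stree (mkW (U0, V0))"] conjI)
         apply simp
        apply (rule disjI1)
        using U0(2) V(3) by blast
    qed
    show ?thesis
      apply (rule disjI2, rule disjI2)
      apply (rule exI[of _ "fmupd l (S, siso_to_stree (mkW (U0, V0))) fmempty"],
             rule exI[of _ "fmupd l (S, V0) fmempty"], rule exI[of _ p])
      apply (intro conjI)
         apply (rule V(2))
        apply (rule eq)
       apply simp
      by (rule all)
  next
    case (Sel p m)
    from so_dec_Sel_inv[OF so_dec(1)[unfolded Sel]] obtain l S T0 U0 where
      U: "fmlookup m l = Some (S, T0)" "U = Sel p (fmupd l (S, U0) fmempty)" "so_dec T0 U0" by blast
    from si_dec_Sel_inv[OF so_dec(2)[unfolded Sel]] obtain mv where
      V: "V = Sel p mv" "fmdom mv = fmdom m"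
      "\<forall>l S T. fmlookup m l = Some (S, T) \<longrightarrow> (\<exists>U'. fmlookup mv l = Some (S, U') \<and> si_dec T U')" by blast
    from V(3) U(1) obtain V0 where V0: "fmlookup mv l = Some (S, V0)" "si_dec T0 V0" by blast
    have eq: "siso_to_stree (mkW (U, V)) = Sel p (fmupd l (S, siso_to_stree (mkW (U0, V0))) fmempty)"
      using U(2) V(1) mkW_Sel[OF V0(1)] by simp
    show ?thesis
      apply (rule disjI2, rule disjI1)
      apply (rule exI[of _ mv], rule exI[of _ l], rule exI[of _ S], rule exI[of _ V0],
             rule exI[of _ "siso_to_stree (mkW (U0, V0))"], rule exI[of _ p])
      apply (intro conjI)
         apply (rule V(1))
        apply (rule eq)
       apply (rule V0(1))
      apply (rule disjI1)
      using U(3) V0(2) by blast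
  qed
qed

theorem lemma3p8:
  shows "(\<forall>T :: ('p, 'l) stree. wf_stree T \<longrightarrow> async_sub T T) \<and>
         (\<forall>T1 T2 T3 :: ('p, 'l) stree. wf_stree T1 \<longrightarrow> wf_stree T2 \<longrightarrow> wf_stree T3 \<longrightarrow>
            async_sub T1 T2 \<longrightarrow> async_sub T2 T3 \<longrightarrow> async_sub T1 T3)"
proof (intro conjI allI impI)
  fix T :: "('p, 'l) stree"
  show "async_sub T T"
    unfolding async_sub_def
  proof (intro allI impI)
    fix U V' assume a: "so_dec T U" "si_dec T V'"
    show "\<exists>W W'. si_dec U (siso_to_stree W) \<and> so_dec V' (siso_to_stree W') \<and> refines W W'"
      using R_si[OF a] R_so[OF a] refines_refl by blast
  qed
next
  fix T1 T2 T3 :: "('p, 'l) stree"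
  assume w1: "wf_stree T1" and w2: "wf_stree T2" and w3: "wf_stree T3"
    and s12: "async_sub T1 T2" and s23: "async_sub T2 T3"
  show "async_sub T1 T3"
    unfolding async_sub_def
  proof (intro allI impI)
    fix U1 V3 assume u1: "so_dec T1 U1" and v3: "si_dec T3 V3"
    define V2 where "V2 = mkV V3 (T2, [])"
    have v2: "si_dec T2 V2" unfolding V2_def by (rule E1[OF w2])
    from s12[unfolded async_sub_def, rule_format, OF u1 v2] obtain W1 W2 where
      W12: "si_dec U1 (siso_to_stree W1)" "so_dec V2 (siso_to_stree W2)" "refines W1 W2" by blast
    define U2 where "U2 = mkU (T2, W2)"
    have u2: "so_dec T2 U2" unfolding U2_def by (rule F1[OF w2])
    from s23[unfolded async_sub_def, rule_format, OF u2 v3] obtain W2' W3 where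
      W23: "si_dec U2 (siso_to_stree W2')" "so_dec V3 (siso_to_stree W3)" "refines W2' W3" by blast
    have tp: "tpath T2 W2'" by (rule tpath_dec[OF u2 W23(1)])
    have "so_dec V2 (siso_to_stree W2')" unfolding V2_def
      by (rule E2[OF tp _ W23(2)]) (simp add: W23(3))
    have "W2' = W2" by (rule G_eq[OF v2 W12(2) \<open>so_dec V2 (siso_to_stree W2')\<close> W23(1)[unfolded U2_def]])
    then have "refines W1 W3" using refines_trans W12(3) W23(3) by blast
    then show "\<exists>W W'. si_dec U1 (siso_to_stree W) \<and> so_dec V3 (siso_to_stree W') \<and> refines W W'"
      using W12(1) W23(2) by blast
  qed
qed

end
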